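(* Let $r, l, h, l', m, n$ be positive integers and let $$P = \left\{ \left( \left\lfloor \tfrac{y}{h} \right\rfloor l' + t,\; y \right) : t \in \{0,\dots,l-1\},\ y \in \{0,\dots,rh-1\} \right\}$$ be the structured dense polygon with parameters $(r,l,h,l')$. Let $\kappa = \gcd(m,h)$, $m = \tau_m \kappa$, $h = \tau_h \kappa$, and write $\tau_m = \alpha \tau_h + \beta$ with integers $\alpha \ge 0$ and $0 \le \beta < \tau_h$. Assume $\tau_m$ divides $r$. Then the number $\lambda_{naive}$ of thread blocks produced by the Naive Tiling Algorithm on $P$ with $m \times n$ thread blocks is $$\lambda_{naive} = \begin{cases} \dfrac{r}{\tau_m}\left( \tau_h \left\lceil \dfrac{l + (\alpha-1) l'}{n} \right\rceil \right) & \text{if } \beta = 0,\\[2ex] \dfrac{r}{\tau_m}\left( (\beta-1) \left\lceil \dfrac{l + (\alpha+1) l'}{n} \right\rceil + (\tau_h - \beta + 1)\left\lceil \dfrac{l + \alpha l'}{n} \right\rceil \right) & \text{if } \beta \neq 0. \end{cases}$$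
   Context: Points are pairs $(x,y)$ with $x$ the column index and $y$ the row index. For the structured dense polygon $P$ with parameters $(r,l,h,l')$, the $q$-th slab ($q = 0,\dots,r-1$) is the set of rows $\{qh, \dots, (q+1)h - 1\}$; rows in slab $q$ contain exactly the columns $ql', \dots, ql' + l - 1$. The Naive Tiling Algorithm (with thread blocks of size $m \times n$) partitions the rows $\{0,\dots,rh-1\}$ into consecutive patches of $m$ rows, the $k$-th patch ($k = 1, \dots, rh/m$) being rows $\{(k-1)m, \dots, km-1\}$, and tiles each patch from left to right. If the $k$-th patch intersects (in rows) exactly $t_k \ge 1$ slabs, its width is defined as $w^{(k)} = l + (t_k - 1) l'$, and the algorithm uses $\lceil w^{(k)}/n \rceil$ thread blocks for that patch; thus $\lambda_{naive} = \sum_{k=1}^{rh/m} \lceil w^{(k)}/n \rceil$. *)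

theory Defs
  imports Complex_Main
begin

text \<open>Structured dense polygon with parameters (r,l,h,l'): points (x,y),
  x = column, y = row.\<close>
definition sdp :: "nat \<Rightarrow> nat \<Rightarrow> nat \<Rightarrow> nat \<Rightarrow> (nat \<times> nat) set" where
  "sdp r l h l' = {((y div h) * l' + t, y) | t y. t < l \<and> y < r * h}"

definition patch_rows :: "nat \<Rightarrow> nat \<Rightarrow> nat set" where
  "patch_rows m k = {(k - 1) * m ..< k * m}"

text \<open>Number of slabs of P (slab q = rows {q h ..< (q+1) h}) intersected by the k-th patch.\<close>
definition slabs_hit :: "nat \<Rightarrow> nat \<Rightarrow> nat \<Rightarrow> nat \<Rightarrow> nat \<Rightarrow> nat \<Rightarrow> nat" where
  "slabs_hit r l h l' m k = card {y div h | x y. (x, y) \<in> sdp r l h l' \<and> y \<in> patch_rows m k}"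

definition patch_width :: "nat \<Rightarrow> nat \<Rightarrow> nat \<Rightarrow> nat \<Rightarrow> nat \<Rightarrow> nat \<Rightarrow> nat" where
  "patch_width r l h l' m k = l + (slabs_hit r l h l' m k - 1) * l'"

definition lambda_naive :: "nat \<Rightarrow> nat \<Rightarrow> nat \<Rightarrow> nat \<Rightarrow> nat \<Rightarrow> nat \<Rightarrow> int" where
  "lambda_naive r l h l' m n =
     (\<Sum>k = 1..(r * h) div m. \<lceil>real (patch_width r l h l' m k) / real n\<rceil>)"

end

theory Submission
  imports Defs "HOL-Number_Theory.Cong"
begin

lemma img_div:
  fixes a b h :: nat
  assumes "a < b" "0 < h"
  shows "(\<lambda>y. y div h) ` {a..<b} = {a div h .. (b-1) div h}"
proof
  show "(\<lambda>y. y div h) ` {a..<b} \<subseteq> {a div h .. (b-1) div h}"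
    using assms by (auto intro!: div_le_mono)
  show "{a div h .. (b-1) div h} \<subseteq> (\<lambda>y. y div h) ` {a..<b}"
  proof
    fix q assume q: "q \<in> {a div h .. (b-1) div h}"
    show "q \<in> (\<lambda>y. y div h) ` {a..<b}"
    proof (cases "q = a div h")
      case True then show ?thesis using assms by auto
    next
      case False
      then have "a div h < q" using q by auto
      then have "a < q * h"
        by (metis assms(2) div_less_iff_less_mult mult.commute)
      moreover have "q * h \<le> b - 1"
        using q by (metis atLeastAtMost_iff div_le_mono div_mult_self_is_m assms(2) le_trans
             less_eq_div_iff_mult_less_eq order_refl)
      ultimately have "q * h \<in> {a..<b}" using assms by auto
      moreover have "q = (q * h) div h" using assms by simp
      ultimately show ?thesis by blast
    qed
  qed
qed

lemma slabs_hit_eq: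
  assumes "0 < l" "0 < h" "0 < m" "1 \<le> k" "k * m \<le> r * h"
  shows "slabs_hit r l h l' m k = (k*m - 1) div h + 1 - ((k-1)*m) div h"
proof -
  have "{y div h | x y. (x, y) \<in> sdp r l h l' \<and> y \<in> patch_rows m k}
        = (\<lambda>y. y div h) ` {(k-1)*m..<k*m}"
  proof (intro equalityI subsetI)
    fix z assume "z \<in> {y div h | x y. (x, y) \<in> sdp r l h l' \<and> y \<in> patch_rows m k}"
    then show "z \<in> (\<lambda>y. y div h) ` {(k-1)*m..<k*m}" unfolding patch_rows_def by auto
  next
    fix z assume "z \<in> (\<lambda>y. y div h) ` {(k-1)*m..<k*m}"
    then obtain y where y: "y \<in> {(k-1)*m..<k*m}" "z = y div h" by auto
    have "((y div h) * l' + 0, y) \<in> sdp r l h l'"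
      unfolding sdp_def using y assms by auto
    then show "z \<in> {y div h | x y. (x, y) \<in> sdp r l h l' \<and> y \<in> patch_rows m k}"
      using y unfolding patch_rows_def by blast
  qed
  moreover have "(k-1)*m < k*m" using assms by (simp add: diff_mult_distrib)
  ultimately show ?thesis unfolding slabs_hit_def using img_div[of "(k-1)*m" "k*m" h] assms
    by simp
qed

lemma sum_periodic:
  fixes G :: "nat \<Rightarrow> int"
  assumes "\<And>i. G (i + p) = G i"
  shows "(\<Sum>i<c*p. G i) = int c * (\<Sum>i<p. G i)"
proof (induction c)
  case 0 then show ?case by simp
next
  case (Suc c)
  have per: "G (i + c*p) = G i" for i
  proof (induction c)
    case (Suc c)
    have "i + Suc c * p = (i + c*p) + p" by simp
    then show ?case using Suc assms by metis
  qed simp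
  have "{..<Suc c * p} = {..<c*p} \<union> {c*p..<c*p+p}" by auto
  then have "(\<Sum>i<Suc c*p. G i) = (\<Sum>i<c*p. G i) + (\<Sum>i\<in>{c*p..<c*p+p}. G i)"
    by (simp add: sum.union_disjoint ivl_disj_int)
  also have "(\<Sum>i\<in>{c*p..<c*p+p}. G i) = (\<Sum>i<p. G (i + c*p))"
    by (metis (no_types) add.commute add_0 atLeast0LessThan sum.shift_bounds_nat_ivl)
  finally show ?case using Suc per by (simp add: algebra_simps)
qed

theorem theorem8:
  fixes r l h l' m n \<kappa> \<tau>m \<tau>h \<alpha> \<beta> :: nat
  assumes "0 < r" "0 < l" "0 < h" "0 < l'" "0 < m" "0 < n"
    and "\<kappa> = gcd m h" "m = \<tau>m * \<kappa>" "h = \<tau>h * \<kappa>"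
    and "\<tau>m = \<alpha> * \<tau>h + \<beta>" "\<beta> < \<tau>h"
    and "\<tau>m dvd r"
  shows "lambda_naive r l h l' m n =
    (if \<beta> = 0 then
       int (r div \<tau>m) * (int \<tau>h * \<lceil>(real l + (real \<alpha> - 1) * real l') / real n\<rceil>)
     else
       int (r div \<tau>m) * ((int \<beta> - 1) * \<lceil>(real l + (real \<alpha> + 1) * real l') / real n\<rceil>
         + (int \<tau>h - int \<beta> + 1) * \<lceil>(real l + real \<alpha> * real l') / real n\<rceil>))"
proof -
  obtain s where rs: "r = \<tau>m * s" using assms(12) by blast
  have kpos: "0 < \<kappa>" using assms(5,7) by simp
  have tmpos: "0 < \<tau>m" using assms(5,8) by simp
  have thpos: "0 < \<tau>h" using assms(3,9) by simp
  have sdiv: "r div \<tau>m = s" using rs tmpos by simp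
  have rh: "r * h = (s * \<tau>h) * m" using rs assms(8,9) by (simp add: algebra_simps)
  have N: "r * h div m = s * \<tau>h" using rh assms(5) by simp
  have cop: "coprime \<tau>m \<tau>h"
  proof -
    have "\<kappa> * gcd \<tau>m \<tau>h = gcd (\<kappa> * \<tau>m) (\<kappa> * \<tau>h)" by (rule gcd_mult_distrib_nat)
    also have "\<dots> = \<kappa>" using assms(7,8,9) by (metis mult.commute)
    finally have "gcd \<tau>m \<tau>h = 1" using kpos by simp
    then show ?thesis by (simp add: coprime_iff_gcd_eq_1)
  qed
  define G where "G i = \<lceil>real (l + ((i*m + m - 1) div h - (i*m) div h) * l') / real n\<rceil>" for i
  have step1: "lambda_naive r l h l' m n = (\<Sum>i<s*\<tau>h. G i)"
  proof -
    have "lambda_naive r l h l' m n =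
       (\<Sum>i<s*\<tau>h. \<lceil>real (patch_width r l h l' m (Suc i)) / real n\<rceil>)"
      unfolding lambda_naive_def N by (simp add: sum.atLeast1_atMost_eq)
    also have "\<dots> = (\<Sum>i<s*\<tau>h. G i)"
    proof (rule sum.cong)
      fix i assume "i \<in> {..<s*\<tau>h}"
      then have "Suc i \<le> s * \<tau>h" by simp
      then have "Suc i * m \<le> (s * \<tau>h) * m" by (rule mult_le_mono1)
      then have "Suc i * m \<le> r * h" using rh by presburger
      then have sh: "slabs_hit r l h l' m (Suc i) = (Suc i*m - 1) div h + 1 - (i*m) div h"
        using slabs_hit_eq[of l h m "Suc i" r l'] assms(2,3,5) by simp
      have e: "Suc i * m - 1 = i*m + m - 1" by simp
      have "(i*m) div h \<le> (i*m + m - 1) div h" using assms(5) by (intro div_le_mono) simp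
      then have "slabs_hit r l h l' m (Suc i) - 1 = (i*m + m - 1) div h - (i*m) div h"
        using sh e by simp
      then show "\<lceil>real (patch_width r l h l' m (Suc i)) / real n\<rceil> = G i"
        unfolding patch_width_def G_def by simp
    qed simp
    finally show ?thesis .
  qed
  have per: "G (i + \<tau>h) = G i" for i
  proof -
    have a: "(i + \<tau>h) * m = i*m + \<tau>m * h" using assms(8,9) by (simp add: algebra_simps)
    have b: "(i*m + \<tau>m*h) div h = i*m div h + \<tau>m" using assms(3) by simp
    have c: "(i*m + \<tau>m*h + m - 1) div h = (i*m + m - 1) div h + \<tau>m"
    proof -
      have "i*m + \<tau>m*h + m - 1 = (i*m + m - 1) + \<tau>m*h" using assms(5) by simp
      then show ?thesis using assms(3) by simp
    qed
    show ?thesis unfolding G_def a using b c by simp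
  qed
  have step2: "(\<Sum>i<s*\<tau>h. G i) = int s * (\<Sum>i<\<tau>h. G i)"
    by (rule sum_periodic) (rule per)
  define g where "g j = \<lceil>real (l + ((j*\<kappa> + m - 1) div h) * l') / real n\<rceil>" for j
  define f where "f i = (i*\<tau>m) mod \<tau>h" for i
  have step3: "G i = g (f i)" for i
  proof -
    let ?x = "i*m"
    have xm: "?x mod h = f i * \<kappa>" unfolding f_def using assms(8,9)
      by (simp add: mult.assoc[symmetric] mod_mult_mult2)
    have "?x + m - 1 = ?x div h * h + (?x mod h + m - 1)" using assms(5) by simp
    then have "(?x + m - 1) div h = ?x div h + (?x mod h + m - 1) div h"
      using assms(3) by simp
    then have "(?x + m - 1) div h - ?x div h = (f i * \<kappa> + m - 1) div h" using xm by simp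
    then show ?thesis unfolding G_def g_def by simp
  qed
  have inj: "inj_on f {..<\<tau>h}"
  proof (rule inj_onI)
    fix i j assume ij: "i \<in> {..<\<tau>h}" "j \<in> {..<\<tau>h}" "f i = f j"
    then have "[i*\<tau>m = j*\<tau>m] (mod \<tau>h)" unfolding f_def cong_def by simp
    then have "[i = j] (mod \<tau>h)" using cong_mult_rcancel_nat cop by blast
    then show "i = j" using ij cong_less_modulus_unique_nat by auto
  qed
  have fimg: "f ` {..<\<tau>h} = {..<\<tau>h}"
  proof (rule endo_inj_surj)
    show "f ` {..<\<tau>h} \<subseteq> {..<\<tau>h}" unfolding f_def using thpos by auto
  qed (simp_all add: inj)
  have step4: "(\<Sum>i<\<tau>h. G i) = (\<Sum>j<\<tau>h. g j)"
  proof -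
    have "(\<Sum>j<\<tau>h. g j) = (\<Sum>j\<in>f ` {..<\<tau>h}. g j)" using fimg by simp
    also have "\<dots> = (\<Sum>i<\<tau>h. g (f i))"
      using sum.reindex[OF inj, of g] by simp
    finally show ?thesis using step3 by simp
  qed
  have main: "lambda_naive r l h l' m n = int (r div \<tau>m) * (\<Sum>j<\<tau>h. g j)"
    using step1 step2 step4 sdiv by simp
  show ?thesis
  proof (cases "\<beta> = 0")
    case True
    have "\<tau>h dvd \<tau>m" using True assms(10) by simp
    then have "\<tau>h = 1" using cop by (metis coprime_commute coprime_dvd_mult_right_iff dvd_refl coprime_self nat_mult_1_right dvd_antisym one_dvd mult.commute gcd_nat.absorb1 coprime_iff_gcd_eq_1 gcd.commute)
    then have hk: "h = \<kappa>" and ma: "m = \<alpha> * h" and apos: "1 \<le> \<alpha>"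
      using assms(9,8,10,5) True by auto
    have "(m - 1) div h = \<alpha> - 1"
    proof (rule div_nat_eqI)
      show "h * (\<alpha> - 1) \<le> m - 1" using ma apos assms(3) by (simp add: diff_mult_distrib2 algebra_simps)
      show "m - 1 < h * Suc (\<alpha> - 1)" using ma apos assms(3) by (simp add: algebra_simps)
    qed
    then have "g 0 = \<lceil>(real l + (real \<alpha> - 1) * real l') / real n\<rceil>"
      unfolding g_def using apos by (simp add: of_nat_diff)
    then show ?thesis using main True \<open>\<tau>h = 1\<close> by simp
  next
    case False
    define A where "A = \<lceil>(real l + real \<alpha> * real l') / real n\<rceil>"
    define B where "B = \<lceil>(real l + (real \<alpha> + 1) * real l') / real n\<rceil>"
    have gv: "g j = (if j + \<beta> \<le> \<tau>h then A else B)" if "j < \<tau>h" for j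
    proof -
      have mm: "m = \<beta>*\<kappa> + h*\<alpha>" using assms(8,9,10) by (simp add: algebra_simps)
      have bk: "1 \<le> \<beta>*\<kappa>" using False kpos by simp
      have e: "j*\<kappa> + m - 1 = ((j + \<beta>)*\<kappa> - 1) + h * \<alpha>"
        unfolding mm add_mult_distrib using bk by linarith
      have d: "(j*\<kappa> + m - 1) div h = ((j + \<beta>)*\<kappa> - 1) div h + \<alpha>"
        unfolding e using assms(3) by simp
      show ?thesis
      proof (cases "j + \<beta> \<le> \<tau>h")
        case True
        have "((j + \<beta>)*\<kappa> - 1) div h = 0"
        proof -
          have "(j + \<beta>)*\<kappa> \<le> h" using True assms(9) by simp
          moreover have "0 < (j + \<beta>) * \<kappa>" using kpos False by simp
          ultimately have "(j + \<beta>) * \<kappa> - 1 < h" by linarith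
          then show ?thesis by (rule div_less)
        qed
        then show ?thesis unfolding g_def A_def using True d by simp
      next
        case F: False
        have "((j + \<beta>)*\<kappa> - 1) div h = 1"
        proof (rule div_nat_eqI)
          have "Suc \<tau>h * \<kappa> \<le> (j + \<beta>)*\<kappa>" using F by (intro mult_le_mono1) simp
          then show "h * 1 \<le> (j + \<beta>)*\<kappa> - 1" using assms(9) kpos by simp
          have "(j + \<beta>)*\<kappa> < (2*\<tau>h)*\<kappa>" using that assms(11) kpos by (intro mult_strict_right_mono) auto
          moreover have "(2*\<tau>h)*\<kappa> = h * Suc 1" using assms(9) by simp
          ultimately show "(j + \<beta>)*\<kappa> - 1 < h * Suc 1" by linarith
        qed
        then show ?thesis unfolding g_def B_def using F d by (simp add: algebra_simps)
      qed
    qed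
    have split: "{..<\<tau>h} = {0..<\<tau>h - \<beta> + 1} \<union> {\<tau>h - \<beta> + 1..<\<tau>h}" using assms(11) False by auto
    have s1: "(\<Sum>j\<in>{0..<\<tau>h - \<beta> + 1}. g j) = (\<Sum>j\<in>{0..<\<tau>h - \<beta> + 1}. A)"
      by (rule sum.cong) (use gv assms(11) False in auto)
    have s2: "(\<Sum>j\<in>{\<tau>h - \<beta> + 1..<\<tau>h}. g j) = (\<Sum>j\<in>{\<tau>h - \<beta> + 1..<\<tau>h}. B)"
      by (rule sum.cong) (use gv assms(11) False in auto)
    have "(\<Sum>j<\<tau>h. g j) = (\<Sum>j\<in>{0..<\<tau>h - \<beta> + 1}. g j) + (\<Sum>j\<in>{\<tau>h - \<beta> + 1..<\<tau>h}. g j)"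
      unfolding split by (rule sum.union_disjoint) auto
    also have "\<dots> = int (\<tau>h - \<beta> + 1) * A + int (\<beta> - 1) * B"
      unfolding s1 s2 using assms(11) False by simp
    also have "\<dots> = (int \<beta> - 1) * B + (int \<tau>h - int \<beta> + 1) * A"
      using assms(11) False by (simp add: of_nat_diff)
    finally show ?thesis using main False unfolding A_def B_def by simp
  qed
qed

end
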